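(* Let $T$ be an irreducible shift of finite type, $Y$ a sofic shift, and $f:T\to Y$ a factor map which is right-continuing almost-everywhere with retract $N\ge 0$. Let $(\Sigma_Y,\pi_Y)$ be the minimal right-resolving cover of $Y$. Then there exists a continuous shift-commuting map $\varphi:T\to\Sigma_Y$ with $f=\pi_Y\circ\varphi$.
   Context: Subshifts are closed shift-invariant subsets of $A^{\mathbb Z}$, $A$ finite, with shift $\sigma(x)_i=x_{i+1}$; a factor map is a continuous, shift-commuting, onto map ($Y$ is then irreducible). A point $y\in Y$ is left-transitive in $Y$ if $\{\sigma^i(y): i\le 0\}$ is dense in $Y$. For an integer $n\ge0$, $f:X\to Y$ is right-continuing almost-everywhere with retract $n$ if for every $x\in X$ and every left-transitive $y\in Y$ with $f(x)_i=y_i$ for all $i\le n$, there exists $x'\in X$ with $x'_i=x_i$ for all $i\le 0$ and $f(x')=y$. The minimal right-resolving (Fischer) cover $(\Sigma_Y,\pi_Y)$ of an irreducible sofic shift $Y$ is the (unique up to conjugacy) pair of an irreducible one-step SFT $\Sigma_Y$ and a one-block factor map $\pi_Y:\Sigma_Y\to Y$ that is right-resolving (if $ab,ac$ are $\Sigma_Y$-words with $\pi_Y(b)=\pi_Y(c)$ then $b=c$) and follower-separated (distinct symbols $a\neq b$ have distinct sets $\{\pi_Y(aw): aw \text{ a } \Sigma_Y\text{-word}\}$). *)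

theory Defs
  imports Main
begin

definition shift :: "(int \<Rightarrow> 'a) \<Rightarrow> (int \<Rightarrow> 'a)" where
  "shift x = (\<lambda>i. x (i + 1))"

definition shiftn :: "int \<Rightarrow> (int \<Rightarrow> 'a) \<Rightarrow> (int \<Rightarrow> 'a)" where
  "shiftn k x = (\<lambda>i. x (i + k))"

definition closed_seq :: "(int \<Rightarrow> 'a) set \<Rightarrow> bool" where
  "closed_seq X \<longleftrightarrow> (\<forall>x. (\<forall>n::nat. \<exists>z\<in>X. \<forall>i. \<bar>i\<bar> \<le> int n \<longrightarrow> z i = x i) \<longrightarrow> x \<in> X)"

definition subshift :: "(int \<Rightarrow> 'a::finite) set \<Rightarrow> bool" where
  "subshift X \<longleftrightarrow> closed_seq X \<and> shift ` X = X"

definition cont_on :: "(int \<Rightarrow> 'a) set \<Rightarrow> ((int \<Rightarrow> 'a) \<Rightarrow> (int \<Rightarrow> 'b)) \<Rightarrow> bool" where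
  "cont_on X f \<longleftrightarrow> (\<forall>x\<in>X. \<forall>n::nat. \<exists>m::nat. \<forall>x'\<in>X.
      (\<forall>i. \<bar>i\<bar> \<le> int m \<longrightarrow> x' i = x i) \<longrightarrow> (\<forall>i. \<bar>i\<bar> \<le> int n \<longrightarrow> f x' i = f x i))"

definition occurs :: "'a list \<Rightarrow> (int \<Rightarrow> 'a) \<Rightarrow> bool" where
  "occurs w x \<longleftrightarrow> (\<exists>i. \<forall>k<length w. x (i + int k) = w ! k)"

definition lang :: "(int \<Rightarrow> 'a) set \<Rightarrow> 'a list set" where
  "lang X = {w. \<exists>x\<in>X. occurs w x}"

definition irreducible_shift :: "(int \<Rightarrow> 'a::finite) set \<Rightarrow> bool" where
  "irreducible_shift X \<longleftrightarrow> (\<forall>u\<in>lang X. \<forall>v\<in>lang X. \<exists>w. u @ w @ v \<in> lang X)"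

definition SFT :: "(int \<Rightarrow> 'a::finite) set \<Rightarrow> bool" where
  "SFT X \<longleftrightarrow> (\<exists>F::'a list set. finite F \<and> X = {x. \<forall>w\<in>F. \<not> occurs w x})"

definition one_step_SFT :: "(int \<Rightarrow> 'a::finite) set \<Rightarrow> bool" where
  "one_step_SFT X \<longleftrightarrow> (\<exists>E::('a \<times> 'a) set. X = {x. \<forall>i. (x i, x (i + 1)) \<in> E})"

definition shift_commuting :: "(int \<Rightarrow> 'a) set \<Rightarrow> ((int \<Rightarrow> 'a) \<Rightarrow> (int \<Rightarrow> 'b)) \<Rightarrow> bool" where
  "shift_commuting X f \<longleftrightarrow> (\<forall>x\<in>X. f (shift x) = shift (f x))"

definition factor_map :: "(int \<Rightarrow> 'a::finite) set \<Rightarrow> (int \<Rightarrow> 'b::finite) set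
    \<Rightarrow> ((int \<Rightarrow> 'a) \<Rightarrow> (int \<Rightarrow> 'b)) \<Rightarrow> bool" where
  "factor_map X Y f \<longleftrightarrow> cont_on X f \<and> shift_commuting X f \<and> f ` X = Y"

text \<open>y is left-transitive in Y: the backward orbit {sigma^i y | i <= 0} is dense in Y.\<close>
definition left_transitive :: "(int \<Rightarrow> 'b::finite) set \<Rightarrow> (int \<Rightarrow> 'b) \<Rightarrow> bool" where
  "left_transitive Y y \<longleftrightarrow> y \<in> Y \<and>
     (\<forall>z\<in>Y. \<forall>n::nat. \<exists>i\<le>0. \<forall>j. \<bar>j\<bar> \<le> int n \<longrightarrow> shiftn i y j = z j)"

definition right_continuing_ae :: "(int \<Rightarrow> 'a::finite) set \<Rightarrow> (int \<Rightarrow> 'b::finite) set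
    \<Rightarrow> ((int \<Rightarrow> 'a) \<Rightarrow> (int \<Rightarrow> 'b)) \<Rightarrow> nat \<Rightarrow> bool" where
  "right_continuing_ae X Y f n \<longleftrightarrow>
     (\<forall>x\<in>X. \<forall>y. left_transitive Y y \<longrightarrow> (\<forall>i\<le>int n. f x i = y i) \<longrightarrow>
        (\<exists>x'\<in>X. (\<forall>i\<le>0. x' i = x i) \<and> f x' = y))"

definition minimal_rr_cover :: "(int \<Rightarrow> 'b::finite) set \<Rightarrow> (int \<Rightarrow> 'c::finite) set
    \<Rightarrow> ((int \<Rightarrow> 'c) \<Rightarrow> (int \<Rightarrow> 'b)) \<Rightarrow> bool" where
  "minimal_rr_cover Y S pi \<longleftrightarrow>
     irreducible_shift S \<and> one_step_SFT S \<and>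
     (\<exists>p::'c \<Rightarrow> 'b. (\<forall>x. pi x = p \<circ> x) \<and>
        factor_map S Y pi \<and>
        (\<forall>a b c. [a, b] \<in> lang S \<longrightarrow> [a, c] \<in> lang S \<longrightarrow> p b = p c \<longrightarrow> b = c) \<and>
        (\<forall>a b. [a] \<in> lang S \<longrightarrow> [b] \<in> lang S \<longrightarrow> a \<noteq> b \<longrightarrow>
           {map p (a # w) | w. a # w \<in> lang S} \<noteq> {map p (b # w) | w. b # w \<in> lang S}))"

end

theory Submission
  imports Defs "HOL-Library.Countable" "HOL-Library.Infinite_Set"
begin



definition wd :: "(int \<Rightarrow> 'x) \<Rightarrow> int \<Rightarrow> nat \<Rightarrow> 'x list" where
  "wd x i n = map (\<lambda>k. x (i + int k)) [0..<n]"

lemma length_wd[simp]: "length (wd x i n) = n" by (simp add: wd_def)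
lemma nth_wd[simp]: "k < n \<Longrightarrow> wd x i n ! k = x (i + int k)" by (simp add: wd_def)

lemma occurs_wd: "occurs w x \<longleftrightarrow> (\<exists>i. wd x i (length w) = w)"
  unfolding occurs_def by (auto simp: list_eq_iff_nth_eq)

lemma wd_in_lang: "x \<in> X \<Longrightarrow> wd x i n \<in> lang X"
  unfolding lang_def occurs_wd by auto

lemma lang_sub: assumes "xs @ ys @ zs \<in> lang X" shows "ys \<in> lang X"
proof -
  from assms obtain x i where x: "x \<in> X" "\<forall>k<length (xs@ys@zs). x (i + int k) = (xs@ys@zs) ! k"
    unfolding lang_def occurs_def by auto
  have "\<forall>k<length ys. x (i + int (length xs) + int k) = ys ! k"
  proof (intro allI impI)
    fix k assume "k < length ys"
    then have "length xs + k < length (xs@ys@zs)" by simp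
    then have "x (i + int (length xs + k)) = (xs@ys@zs) ! (length xs + k)" using x(2) by blast
    also have "\<dots> = ys ! k" using \<open>k < length ys\<close> by (simp add: nth_append)
    finally show "x (i + int (length xs) + int k) = ys ! k" by (simp add: add.assoc)
  qed
  then show ?thesis using x(1) unfolding lang_def occurs_def by blast
qed

lemma lang_prefix: "xs @ ys \<in> lang X \<Longrightarrow> xs \<in> lang X"
  using lang_sub[of "[]" xs ys] by simp
lemma lang_suffix: "xs @ ys \<in> lang X \<Longrightarrow> ys \<in> lang X"
  using lang_sub[of xs ys "[]"] by simp

lemma shiftn_shiftn[simp]: "shiftn a (shiftn b x) = shiftn (a + b) x"
  by (simp add: shiftn_def add.commute add.left_commute)
lemma shiftn_0[simp]: "shiftn 0 x = x" by (simp add: shiftn_def)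
lemma shift_shiftn: "shift x = shiftn 1 x" by (simp add: shift_def shiftn_def)
lemma shiftn_app: "shiftn k x i = x (i + k)" by (simp add: shiftn_def)

lemma shift_closed_shiftn:
  assumes "shift ` X = X" and "x \<in> X" shows "shiftn k x \<in> X"
proof -
  have pos: "shiftn (int n) z \<in> X" if "z \<in> X" for n z
    using that proof (induction n arbitrary: z)
    case 0 then show ?case by simp
  next
    case (Suc n)
    have "shiftn (int (Suc n)) z = shift (shiftn (int n) z)"
      by (simp add: shift_def shiftn_def add.commute add.left_commute)
    then show ?case using Suc assms(1) by blast
  qed
  have neg: "shiftn (- int n) z \<in> X" if "z \<in> X" for n z
    using that proof (induction n arbitrary: z)
    case 0 then show ?case by simp
  next
    case (Suc n)
    then have "shiftn (- int n) z \<in> shift ` X" using assms(1) by auto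
    then obtain w where w: "w \<in> X" "shiftn (- int n) z = shift w" by auto
    have "shiftn (- int (Suc n)) z = w"
    proof
      fix i
      have "w i = shift w (i - 1)" by (simp add: shift_def)
      also have "\<dots> = z (i - 1 - int n)" using w(2) by (metis shiftn_app diff_conv_add_uminus)
      finally show "shiftn (- int (Suc n)) z i = w i" by (simp add: shiftn_app algebra_simps)
    qed
    then show ?case using w by simp
  qed
  show ?thesis
  proof (cases "k \<ge> 0")
    case True then show ?thesis using pos[OF assms(2), of "nat k"] by simp
  next
    case False then show ?thesis using neg[OF assms(2), of "nat (-k)"] by simp
  qed
qed

lemma comm_shiftn:
  assumes "shift ` X = X" and "\<forall>x\<in>X. f (shift x) = shift (f x)" and "x \<in> X"
  shows "f (shiftn k x) = shiftn k (f x)"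
proof -
  have pos: "f (shiftn (int n) z) = shiftn (int n) (f z)" if "z \<in> X" for n z
  proof (induction n)
    case 0 then show ?case by simp
  next
    case (Suc n)
    have e: "shiftn (int (Suc n)) w = shift (shiftn (int n) w)" for w :: "int \<Rightarrow> 'z"
      by (simp add: shift_def shiftn_def add.commute add.left_commute)
    have "f (shiftn (int (Suc n)) z) = f (shift (shiftn (int n) z))" by (simp only: e)
    also have "\<dots> = shift (f (shiftn (int n) z))" using assms(2) shift_closed_shiftn[OF assms(1) that] by blast
    also have "\<dots> = shift (shiftn (int n) (f z))" using Suc by simp
    also have "\<dots> = shiftn (int (Suc n)) (f z)" by (simp only: e)
    finally show ?case .
  qed
  show ?thesis
  proof (cases "k \<ge> 0")
    case True then show ?thesis using pos[OF assms(3), of "nat k"] by simp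
  next
    case False
    let ?z = "shiftn k x"
    have z: "?z \<in> X" using shift_closed_shiftn[OF assms(1,3)] .
    have "f x = f (shiftn (int (nat (-k))) ?z)" using False by simp
    also have "\<dots> = shiftn (int (nat (-k))) (f ?z)" using pos[OF z] .
    finally have "shiftn k (f x) = shiftn k (shiftn (int (nat (-k))) (f ?z))" by simp
    then show ?thesis using False by simp
  qed
qed




definition restr :: "nat \<Rightarrow> (int \<Rightarrow> 'a) \<Rightarrow> (int \<Rightarrow> 'a)" where
  "restr n g = (\<lambda>i. if \<bar>i\<bar> \<le> int n then g i else undefined)"

lemma finite_restr: "finite (range (restr n :: (int \<Rightarrow> 'a::finite) \<Rightarrow> _))"
proof -
  have "range (restr n :: (int \<Rightarrow> 'a::finite) \<Rightarrow> _) \<subseteq>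
     {g. \<forall>i. (i \<in> {-int n..int n} \<longrightarrow> g i \<in> (UNIV::'a set)) \<and> (i \<notin> {-int n..int n} \<longrightarrow> g i = undefined)}"
    by (auto simp: restr_def)
  moreover have "finite {g. \<forall>i. (i \<in> {-int n..int n} \<longrightarrow> g i \<in> (UNIV::'a set)) \<and> (i \<notin> {-int n..int n} \<longrightarrow> g i = undefined)}"
    by (rule finite_set_of_finite_funs) auto
  ultimately show ?thesis by (rule finite_subset)
qed

lemma restr_eq: "restr n g = restr n h \<Longrightarrow> \<bar>i\<bar> \<le> int n \<Longrightarrow> g i = h i"
  unfolding restr_def by (drule fun_cong[of _ _ i]) simp

definition refine :: "(nat \<Rightarrow> int \<Rightarrow> 'a::finite) \<Rightarrow> nat \<Rightarrow> nat set \<Rightarrow> nat set" where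
  "refine X n I = (SOME J. J \<subseteq> I \<and> infinite J \<and> (\<forall>m\<in>J. \<forall>m'\<in>J. restr n (X m) = restr n (X m')))"

lemma refine_ex:
  assumes "infinite I"
  shows "\<exists>J. J \<subseteq> I \<and> infinite J \<and> (\<forall>m\<in>J. \<forall>m'\<in>J. restr n (X m) = restr n ((X::nat \<Rightarrow> int \<Rightarrow> 'a::finite) m'))"
proof -
  have "finite ((\<lambda>m. restr n (X m)) ` I)"
    using finite_restr[of n] by (rule finite_subset[rotated]) auto
  from pigeonhole_infinite[OF assms this] obtain a0 where
    "a0 \<in> I" "infinite {a\<in>I. restr n (X a) = restr n (X a0)}" by auto
  then show ?thesis by (intro exI[of _ "{a\<in>I. restr n (X a) = restr n (X a0)}"]) auto
qed

lemma refine_props: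
  assumes "infinite I"
  shows "refine X n I \<subseteq> I" "infinite (refine X n I)"
    "\<forall>m\<in>refine X n I. \<forall>m'\<in>refine X n I. restr n (X m) = restr n (X m')"
proof -
  have "refine X n I \<subseteq> I \<and> infinite (refine X n I) \<and> (\<forall>m\<in>refine X n I. \<forall>m'\<in>refine X n I. restr n (X m) = restr n (X m'))"
    unfolding refine_def by (rule someI_ex[OF refine_ex[OF assms]])
  then show "refine X n I \<subseteq> I" "infinite (refine X n I)"
    "\<forall>m\<in>refine X n I. \<forall>m'\<in>refine X n I. restr n (X m) = restr n (X m')" by blast+
qed

primrec Ist :: "(nat \<Rightarrow> int \<Rightarrow> 'a::finite) \<Rightarrow> nat \<Rightarrow> nat set" where
  "Ist X 0 = refine X 0 UNIV"
| "Ist X (Suc n) = refine X (Suc n) (Ist X n)"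

lemma Ist_props:
  "infinite (Ist X n) \<and> (\<forall>m\<in>Ist X n. \<forall>m'\<in>Ist X n. restr n (X m) = restr n (X m'))"
proof (induction n)
  case 0
  have i: "infinite (UNIV :: nat set)" by (rule infinite_UNIV_nat)
  show ?case unfolding Ist.simps using refine_props(2,3)[OF i, of X 0] by blast
next
  case (Suc n)
  then have i: "infinite (Ist X n)" by blast
  show ?case unfolding Ist.simps using refine_props(2,3)[OF i, of X "Suc n"] by blast
qed

lemma Ist_sub: "Ist X (Suc n) \<subseteq> Ist X n"
proof -
  have i: "infinite (Ist X n)" using Ist_props[of X n] by blast
  show ?thesis unfolding Ist.simps(2) by (rule refine_props(1)[OF i])
qed

lemma Ist_mono: "k \<le> n \<Longrightarrow> Ist X n \<subseteq> Ist X k"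
proof (induction n)
  case 0 then show ?case by simp
next
  case (Suc n)
  show ?case
  proof (cases "k = Suc n")
    case True then show ?thesis by simp
  next
    case False
    then have "k \<le> n" using Suc.prems by simp
    then show ?thesis using Suc.IH Ist_sub[of X n] by blast
  qed
qed

lemma cluster:
  fixes X :: "nat \<Rightarrow> int \<Rightarrow> 'a::finite"
  shows "\<exists>x. \<forall>n M. \<exists>m\<ge>M. \<forall>i. \<bar>i\<bar> \<le> int n \<longrightarrow> X m i = x i"
proof -
  define pick where "pick n = (SOME m. m \<in> Ist X n)" for n
  have pick: "pick n \<in> Ist X n" for n
  proof -
    have "Ist X n \<noteq> {}" using Ist_props[of X n] by auto
    then show ?thesis unfolding pick_def by (simp add: some_in_eq)
  qed
  define x where "x i = X (pick (nat \<bar>i\<bar>)) i" for i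
  have "\<exists>m\<ge>M. \<forall>i. \<bar>i\<bar> \<le> int n \<longrightarrow> X m i = x i" for n M
  proof -
    obtain m where m: "m \<in> Ist X n" "m \<ge> M"
      using Ist_props[of X n] by (meson infinite_nat_iff_unbounded_le)
    have "X m i = x i" if "\<bar>i\<bar> \<le> int n" for i
    proof -
      have k: "nat \<bar>i\<bar> \<le> n" using that by simp
      have "m \<in> Ist X (nat \<bar>i\<bar>)" using Ist_mono[OF k] m(1) by auto
      then have "restr (nat \<bar>i\<bar>) (X m) = restr (nat \<bar>i\<bar>) (X (pick (nat \<bar>i\<bar>)))"
        using Ist_props[of X "nat \<bar>i\<bar>"] pick by blast
      then show ?thesis unfolding x_def by (rule restr_eq) simp
    qed
    then show ?thesis using m by blast
  qed
  then show ?thesis by blast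
qed

lemma unif_cont:
  fixes X :: "(int \<Rightarrow> 'a::finite) set"
  assumes "closed_seq X" "cont_on X f"
  shows "\<exists>m::nat. \<forall>x\<in>X. \<forall>x'\<in>X. (\<forall>i. \<bar>i\<bar> \<le> int m \<longrightarrow> x i = x' i) \<longrightarrow> (\<forall>i. \<bar>i\<bar> \<le> int n \<longrightarrow> f x i = f x' i)"
proof (rule ccontr)
  assume "\<not> ?thesis"
  then have "\<forall>m::nat. \<exists>x x'. x\<in>X \<and> x'\<in>X \<and> (\<forall>i. \<bar>i\<bar> \<le> int m \<longrightarrow> x i = x' i) \<and> \<not>(\<forall>i. \<bar>i\<bar> \<le> int n \<longrightarrow> f x i = f x' i)"
    by blast
  then have "\<forall>m::nat. \<exists>q. fst q\<in>X \<and> snd q\<in>X \<and> (\<forall>i. \<bar>i\<bar> \<le> int m \<longrightarrow> fst q i = snd q i) \<and> \<not>(\<forall>i. \<bar>i\<bar> \<le> int n \<longrightarrow> f (fst q) i = f (snd q) i)"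
    by simp
  then obtain Q where Q: "\<And>m. fst (Q m)\<in>X \<and> snd (Q m)\<in>X \<and> (\<forall>i. \<bar>i\<bar> \<le> int m \<longrightarrow> fst (Q m) i = snd (Q m) i) \<and> \<not>(\<forall>i. \<bar>i\<bar> \<le> int n \<longrightarrow> f (fst (Q m)) i = f (snd (Q m)) i)"
    by (metis choice_iff)
  define A where "A m = fst (Q m)" for m
  define B where "B m = snd (Q m)" for m
  have AB: "\<And>m. A m \<in> X \<and> B m \<in> X \<and> (\<forall>i. \<bar>i\<bar> \<le> int m \<longrightarrow> A m i = B m i) \<and> \<not>(\<forall>i. \<bar>i\<bar> \<le> int n \<longrightarrow> f (A m) i = f (B m) i)"
    using Q unfolding A_def B_def by blast
  obtain x where x: "\<And>n M. \<exists>m\<ge>M. \<forall>i. \<bar>i\<bar> \<le> int n \<longrightarrow> A m i = x i"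
    using cluster[of A] by blast
  have xX: "x \<in> X"
    using assms(1) unfolding closed_seq_def
  proof (elim allE impE)
    show "\<forall>n::nat. \<exists>z\<in>X. \<forall>i. \<bar>i\<bar> \<le> int n \<longrightarrow> z i = x i"
    proof
      fix n
      obtain m where "\<forall>i. \<bar>i\<bar> \<le> int n \<longrightarrow> A m i = x i" using x by blast
      then show "\<exists>z\<in>X. \<forall>i. \<bar>i\<bar> \<le> int n \<longrightarrow> z i = x i" using AB[of m] by blast
    qed
  qed
  obtain m0 where m0: "\<forall>x'\<in>X. (\<forall>i. \<bar>i\<bar> \<le> int m0 \<longrightarrow> x' i = x i) \<longrightarrow> (\<forall>i. \<bar>i\<bar> \<le> int n \<longrightarrow> f x' i = f x i)"
    using assms(2) xX unfolding cont_on_def by blast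
  obtain m where m: "m \<ge> m0" "\<forall>i. \<bar>i\<bar> \<le> int m0 \<longrightarrow> A m i = x i" using x by blast
  have "\<forall>i. \<bar>i\<bar> \<le> int m0 \<longrightarrow> B m i = x i" using m AB[of m] by force
  then have 1: "\<forall>i. \<bar>i\<bar> \<le> int n \<longrightarrow> f (B m) i = f x i" using m0 AB[of m] by blast
  have 2: "\<forall>i. \<bar>i\<bar> \<le> int n \<longrightarrow> f (A m) i = f x i" using m0 m(2) AB[of m] by blast
  have "\<forall>i. \<bar>i\<bar> \<le> int n \<longrightarrow> f (A m) i = f (B m) i" using 1 2 by simp
  then show False using AB by blast
qed




locale setting =
  fixes T :: "(int \<Rightarrow> 'a::finite) set" and Y :: "(int \<Rightarrow> 'b::finite) set"
    and f :: "(int \<Rightarrow> 'a) \<Rightarrow> (int \<Rightarrow> 'b)" and N :: nat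
    and S :: "(int \<Rightarrow> 'c::finite) set" and p :: "'c \<Rightarrow> 'b" and E :: "('c \<times> 'c) set"
    and F :: "'a list set"
  assumes T_shift: "shift ` T = T" and T_closed: "closed_seq T" and T_irr: "irreducible_shift T"
    and T_F: "T = {x. \<forall>w\<in>F. \<not> occurs w x}" and F_fin: "finite F"
    and Y_shift: "shift ` Y = Y"
    and f_cont: "cont_on T f" and f_comm: "\<forall>x\<in>T. f (shift x) = shift (f x)" and f_onto: "f ` T = Y"
    and rc: "right_continuing_ae T Y f N"
    and S_E: "S = {x. \<forall>i. (x i, x (i+1)) \<in> E}"
    and piS: "(\<lambda>s. p \<circ> s) ` S = Y"
    and RR: "\<forall>a b c. [a,b] \<in> lang S \<longrightarrow> [a,c] \<in> lang S \<longrightarrow> p b = p c \<longrightarrow> b = c"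
    and SEP: "\<forall>a b. [a] \<in> lang S \<longrightarrow> [b] \<in> lang S \<longrightarrow> a \<noteq> b \<longrightarrow>
           {map p (a # w) | w. a # w \<in> lang S} \<noteq> {map p (b # w) | w. b # w \<in> lang S}"
begin

lemma T_shiftn: "x \<in> T \<Longrightarrow> shiftn k x \<in> T"
  using shift_closed_shiftn[OF T_shift] .
lemma Y_shiftn: "y \<in> Y \<Longrightarrow> shiftn k y \<in> Y"
  using shift_closed_shiftn[OF Y_shift] .
lemma f_shiftn: "x \<in> T \<Longrightarrow> f (shiftn k x) = shiftn k (f x)"
  using comm_shiftn[OF T_shift f_comm] .
lemma fY: "x \<in> T \<Longrightarrow> f x \<in> Y" using f_onto by blast

definition rad :: nat where
  "rad = (SOME m::nat. \<forall>x\<in>T. \<forall>x'\<in>T. (\<forall>i. \<bar>i\<bar> \<le> int m \<longrightarrow> x i = x' i) \<longrightarrow> (\<forall>i. \<bar>i\<bar> \<le> int 0 \<longrightarrow> f x i = f x' i))"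

lemma rad0: "x \<in> T \<Longrightarrow> x' \<in> T \<Longrightarrow> (\<forall>i. \<bar>i\<bar> \<le> int rad \<longrightarrow> x i = x' i) \<Longrightarrow> f x 0 = f x' 0"
proof -
  assume a: "x \<in> T" "x' \<in> T" "\<forall>i. \<bar>i\<bar> \<le> int rad \<longrightarrow> x i = x' i"
  have "\<forall>x\<in>T. \<forall>x'\<in>T. (\<forall>i. \<bar>i\<bar> \<le> int rad \<longrightarrow> x i = x' i) \<longrightarrow> (\<forall>i. \<bar>i\<bar> \<le> int 0 \<longrightarrow> f x i = f x' i)"
    unfolding rad_def by (rule someI_ex[OF unif_cont[OF T_closed f_cont]])
  then have "\<forall>i. \<bar>i\<bar> \<le> int 0 \<longrightarrow> f x i = f x' i" using a by blast
  then show ?thesis by simp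
qed

lemma radius:
  assumes "x \<in> T" "x' \<in> T" "\<forall>i. \<bar>i - j\<bar> \<le> int rad \<longrightarrow> x i = x' i"
  shows "f x j = f x' j"
proof -
  have "f (shiftn j x) 0 = f (shiftn j x') 0"
  proof (rule rad0)
    show "shiftn j x \<in> T" "shiftn j x' \<in> T" using assms T_shiftn by auto
    show "\<forall>i. \<bar>i\<bar> \<le> int rad \<longrightarrow> shiftn j x i = shiftn j x' i"
      using assms(3) by (auto simp: shiftn_app)
  qed
  then show ?thesis using f_shiftn[OF assms(1)] f_shiftn[OF assms(2)] by (simp add: shiftn_app)
qed

definition Lm :: nat where "Lm = Max (insert 0 (length ` F))"

lemma Lm_ge: "w \<in> F \<Longrightarrow> length w \<le> Lm"
  unfolding Lm_def using F_fin by (intro Max_ge) auto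

lemma memT: "x \<in> T \<longleftrightarrow> (\<forall>w\<in>F. \<not> occurs w x)" using T_F by blast

lemma glue_T:
  assumes "x1 \<in> T" "x2 \<in> T" "\<forall>i. c < i \<and> i \<le> c + int Lm \<longrightarrow> x1 i = x2 i"
  shows "(\<lambda>i. if i \<le> c then x1 i else x2 i) \<in> T"
  unfolding memT
proof (intro ballI notI)
  fix w assume w: "w \<in> F" and oc: "occurs w (\<lambda>i. if i \<le> c then x1 i else x2 i)"
  then obtain i where i: "\<forall>k<length w. (if i + int k \<le> c then x1 (i + int k) else x2 (i + int k)) = w ! k"
    unfolding occurs_def by blast
  have lw: "length w \<le> Lm" using Lm_ge[OF w] .
  show False
  proof (cases "i \<le> c")
    case True
    have "\<forall>k<length w. x1 (i + int k) = w ! k"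
    proof (intro allI impI)
      fix k assume k: "k < length w"
      show "x1 (i + int k) = w ! k"
      proof (cases "i + int k \<le> c")
        case True then show ?thesis using i k by auto
      next
        case False
        then have "x1 (i + int k) = x2 (i + int k)" using assms(3) k lw True by auto
        then show ?thesis using i k False by auto
      qed
    qed
    then have "occurs w x1" unfolding occurs_def by blast
    then show False using assms(1) w memT by blast
  next
    case False
    have "\<forall>k<length w. x2 (i + int k) = w ! k" using i False by auto
    then have "occurs w x2" unfolding occurs_def by blast
    then show False using assms(2) w memT by blast
  qed
qed


lemma lt_transfer:
  assumes lt: "left_transitive Y y" and y': "y' \<in> Y" and ag: "\<forall>i\<le>K. y' i = y (i + d)"
  shows "left_transitive Y y'"
  unfolding left_transitive_def
proof (intro conjI ballI allI)
  show "y' \<in> Y" by fact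
  fix z n assume z: "z \<in> Y"
  define D where "D = nat (\<bar>d\<bar> + \<bar>K\<bar> + int n)"
  have zD: "shiftn (int D) z \<in> Y" using Y_shiftn[OF z] .
  obtain i' where i': "i' \<le> 0" "\<forall>j. \<bar>j\<bar> \<le> int (n + D) \<longrightarrow> shiftn i' y j = shiftn (int D) z j"
    using lt zD unfolding left_transitive_def by blast
  show "\<exists>i\<le>0. \<forall>j. \<bar>j\<bar> \<le> int n \<longrightarrow> shiftn i y' j = z j"
  proof (intro exI conjI allI impI)
    show "i' - int D - d \<le> 0" using i'(1) unfolding D_def by simp
    fix j assume j: "\<bar>j\<bar> \<le> int n"
    have "j + (i' - int D - d) \<le> K" using i'(1) j unfolding D_def by simp
    then have "y' (j + (i' - int D - d)) = y (j + (i' - int D - d) + d)" using ag by blast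
    also have "\<dots> = shiftn i' y (j - int D)" by (simp add: shiftn_app algebra_simps)
    also have "\<dots> = shiftn (int D) z (j - int D)" using i'(2) j by auto
    also have "\<dots> = z j" by (simp add: shiftn_app)
    finally show "shiftn (i' - int D - d) y' j = z j" by (simp add: shiftn_app)
  qed
qed

lemma lt_occ:
  assumes lt: "left_transitive Y y" and z: "z \<in> Y" and w: "wd z a m = w"
  shows "\<exists>i. i + int m \<le> K \<and> wd y i m = w"
proof -
  define D where "D = nat (\<bar>K\<bar> + int m)"
  have zD: "shiftn (a + int D) z \<in> Y" using Y_shiftn[OF z] .
  obtain i' where i': "i' \<le> 0" "\<forall>j. \<bar>j\<bar> \<le> int (D + m) \<longrightarrow> shiftn i' y j = shiftn (a + int D) z j"
    using lt zD unfolding left_transitive_def by blast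
  have "wd y (i' - int D) m = w"
  proof -
    have "wd y (i' - int D) m ! k = wd z a m ! k" if "k < m" for k
    proof -
      have "\<bar>int k - int D\<bar> \<le> int (D + m)" using that by simp
      then have "shiftn i' y (int k - int D) = shiftn (a + int D) z (int k - int D)" using i'(2) by blast
      then show ?thesis using that by (simp add: shiftn_app algebra_simps)
    qed
    then show ?thesis using w by (simp add: list_eq_iff_nth_eq)
  qed
  moreover have "i' - int D + int m \<le> K" using i'(1) unfolding D_def by simp
  ultimately show ?thesis by blast
qed

lemma extend_left:
  assumes x: "x \<in> T" and w: "w \<in> lang T"
  shows "\<exists>x'\<in>T. (\<forall>i\<ge>P. x' i = x i) \<and> (\<exists>i. i + int (length w) \<le> P \<and> wd x' i (length w) = w)"
proof -
  define v where "v = wd x P Lm"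
  have v: "v \<in> lang T" unfolding v_def using wd_in_lang[OF x] .
  obtain c where "w @ c @ v \<in> lang T" using T_irr w v unfolding irreducible_shift_def by blast
  then obtain t i0 where t: "t \<in> T" "wd t i0 (length (w @ c @ v)) = w @ c @ v"
    unfolding lang_def occurs_wd by blast
  have tk: "t (i0 + int k) = (w @ c @ v) ! k" if "k < length w + length c + Lm" for k
  proof -
    have "wd t i0 (length (w @ c @ v)) ! k = (w @ c @ v) ! k" using t(2) by simp
    then show ?thesis using that by (simp add: v_def)
  qed
  define d where "d = i0 + int (length w) + int (length c) - P"
  define t' where "t' = shiftn d t"
  have t': "t' \<in> T" unfolding t'_def using T_shiftn[OF t(1)] .
  have agree: "\<forall>i. P - 1 < i \<and> i \<le> P - 1 + int Lm \<longrightarrow> t' i = x i"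
  proof (intro allI impI)
    fix i assume i: "P - 1 < i \<and> i \<le> P - 1 + int Lm"
    define k where "k = nat (i - P)"
    have k: "k < Lm" "i = P + int k" using i unfolding k_def by auto
    have "t' i = t (i0 + int (length w + length c + k))" unfolding t'_def d_def using k(2)
      by (simp add: shiftn_app algebra_simps)
    also have "\<dots> = (w @ c @ v) ! (length w + length c + k)" using tk[of "length w + length c + k"] k(1) by simp
    also have "\<dots> = v ! k" by (simp add: nth_append)
    also have "\<dots> = x i" unfolding v_def using k by simp
    finally show "t' i = x i" .
  qed
  define z where "z = (\<lambda>i. if i \<le> P - 1 then t' i else x i)"
  have zT: "z \<in> T" unfolding z_def by (rule glue_T[OF t' x agree])
  have "wd z (P - int (length w) - int (length c)) (length w) = w"
  proof -
    have "wd z (P - int (length w) - int (length c)) (length w) ! k = w ! k" if "k < length w" for k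
    proof -
      have "wd z (P - int (length w) - int (length c)) (length w) ! k = t (i0 + int k)"
        using that unfolding z_def t'_def d_def by (simp add: shiftn_app algebra_simps)
      also have "\<dots> = w ! k" using tk[of k] that by (simp add: nth_append)
      finally show ?thesis .
    qed
    then show ?thesis by (simp add: list_eq_iff_nth_eq)
  qed
  moreover have "\<forall>i\<ge>P. z i = x i" unfolding z_def by simp
  ultimately show ?thesis using zT by (intro bexI[of _ z]) (auto intro!: exI[of _ "P - int (length w) - int (length c)"])
qed

end



context setting begin

definition ext :: "(int \<Rightarrow> 'a) \<Rightarrow> int \<Rightarrow> 'a list \<Rightarrow> (int \<Rightarrow> 'a) \<times> int" where
  "ext z P w = (SOME q. fst q \<in> T \<and> (\<forall>i\<ge>P. fst q i = z i) \<and> snd q \<le> P - 1 \<and>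
      (\<exists>i\<ge>snd q. i + int (length w) \<le> P \<and> wd (fst q) i (length w) = w))"

lemma ext_props:
  assumes "z \<in> T" "w \<in> lang T"
  shows "fst (ext z P w) \<in> T \<and> (\<forall>i\<ge>P. fst (ext z P w) i = z i) \<and> snd (ext z P w) \<le> P - 1 \<and>
      (\<exists>i\<ge>snd (ext z P w). i + int (length w) \<le> P \<and> wd (fst (ext z P w)) i (length w) = w)"
proof -
  obtain x' i where x': "x' \<in> T" "\<forall>i\<ge>P. x' i = z i" "i + int (length w) \<le> P" "wd x' i (length w) = w"
    using extend_left[OF assms] by blast
  have "\<exists>q. fst q \<in> T \<and> (\<forall>i\<ge>P. fst q i = z i) \<and> snd q \<le> P - 1 \<and>
      (\<exists>i\<ge>snd q. i + int (length w) \<le> P \<and> wd (fst q) i (length w) = w)"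
  proof -
    have "\<exists>ia\<ge>min (P - 1) i. ia + int (length w) \<le> P \<and> wd x' ia (length w) = w"
      using x' by (intro exI[of _ i]) auto
    then show ?thesis using x' by (intro exI[of _ "(x', min (P - 1) i)"]) auto
  qed
  then show ?thesis unfolding ext_def by (rule someI_ex)
qed

definition stp :: "nat \<Rightarrow> (int \<Rightarrow> 'a) \<times> int \<Rightarrow> (int \<Rightarrow> 'a) \<times> int" where
  "stp k q = (if from_nat k \<in> lang T then ext (fst q) (snd q) (from_nat k) else (fst q, snd q - 1))"

primrec sq :: "(int \<Rightarrow> 'a) \<Rightarrow> int \<Rightarrow> nat \<Rightarrow> (int \<Rightarrow> 'a) \<times> int" where
  "sq x P0 0 = (x, P0)"
| "sq x P0 (Suc k) = stp k (sq x P0 k)"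

lemma sq_props:
  assumes x: "x \<in> T"
  shows "fst (sq x P0 k) \<in> T \<and> snd (sq x P0 k) \<le> P0 - int k"
proof (induction k)
  case 0 then show ?case using x by simp
next
  case (Suc k)
  then show ?case using ext_props[of "fst (sq x P0 k)" "from_nat k" "snd (sq x P0 k)"]
    by (auto simp: stp_def)
qed

lemma sq_step:
  assumes x: "x \<in> T"
  shows "(\<forall>i\<ge>snd (sq x P0 k). fst (sq x P0 (Suc k)) i = fst (sq x P0 k) i) \<and>
         snd (sq x P0 (Suc k)) \<le> snd (sq x P0 k) - 1 \<and>
         (from_nat k \<in> lang T \<longrightarrow> (\<exists>i\<ge>snd (sq x P0 (Suc k)). i + int (length (from_nat k :: 'a list)) \<le> snd (sq x P0 k) \<and>
              wd (fst (sq x P0 (Suc k))) i (length (from_nat k :: 'a list)) = from_nat k))"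
  using ext_props[of "fst (sq x P0 k)" "from_nat k" "snd (sq x P0 k)"] sq_props[OF x, of P0 k]
  by (auto simp: stp_def)

lemma sq_agree:
  assumes x: "x \<in> T" and km: "k \<le> m"
  shows "\<forall>i\<ge>snd (sq x P0 k). fst (sq x P0 m) i = fst (sq x P0 k) i"
  using km
proof (induction m rule: dec_induct)
  case base then show ?case by simp
next
  case (step m)
  have "snd (sq x P0 m) \<le> snd (sq x P0 k)"
    using step.hyps(1) proof (induction m rule: dec_induct)
    case base then show ?case by simp
  next
    case (step m) then show ?case using sq_step[OF x, of P0 m] by simp
  qed
  then show ?case using step.IH sq_step[OF x, of P0 m] by auto
qed

definition lim :: "(int \<Rightarrow> 'a) \<Rightarrow> int \<Rightarrow> int \<Rightarrow> 'a" where
  "lim x P0 i = fst (sq x P0 (nat (P0 - i))) i"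

lemma lim_eq:
  assumes x: "x \<in> T" and i: "i \<ge> snd (sq x P0 m)"
  shows "lim x P0 i = fst (sq x P0 m) i"
proof -
  let ?K = "nat (P0 - i)"
  have iK: "i \<ge> snd (sq x P0 ?K)" using sq_props[OF x, of P0 ?K] by (cases "i \<le> P0") auto
  have "fst (sq x P0 (max ?K m)) i = fst (sq x P0 ?K) i" using sq_agree[OF x, of ?K "max ?K m" P0] iK by simp
  moreover have "fst (sq x P0 (max ?K m)) i = fst (sq x P0 m) i" using sq_agree[OF x, of m "max ?K m" P0] i by simp
  ultimately show ?thesis unfolding lim_def by simp
qed

lemma lim_T:
  assumes x: "x \<in> T" shows "lim x P0 \<in> T"
  using T_closed unfolding closed_seq_def
proof (elim allE impE)
  show "\<forall>n::nat. \<exists>z\<in>T. \<forall>i. \<bar>i\<bar> \<le> int n \<longrightarrow> z i = lim x P0 i"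
  proof
    fix n :: nat
    let ?m = "nat (P0 + int n)"
    have "\<forall>i. \<bar>i\<bar> \<le> int n \<longrightarrow> fst (sq x P0 ?m) i = lim x P0 i"
    proof (intro allI impI)
      fix i :: int assume "\<bar>i\<bar> \<le> int n"
      moreover have "snd (sq x P0 ?m) \<le> P0 - int ?m" using sq_props[OF x] by blast
      ultimately have "i \<ge> snd (sq x P0 ?m)" by linarith
      then show "fst (sq x P0 ?m) i = lim x P0 i" using lim_eq[OF x] by simp
    qed
    then show "\<exists>z\<in>T. \<forall>i. \<bar>i\<bar> \<le> int n \<longrightarrow> z i = lim x P0 i" using sq_props[OF x] by blast
  qed
qed

lemma lim_x: "x \<in> T \<Longrightarrow> i \<ge> P0 \<Longrightarrow> lim x P0 i = x i"
  using lim_eq[of x P0 0 i] by simp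

lemma lim_occ:
  assumes x: "x \<in> T" and w: "w \<in> lang T"
  shows "\<exists>i. i + int (length w) \<le> P0 \<and> wd (lim x P0) i (length w) = w"
proof -
  let ?k = "to_nat w"
  have fk: "from_nat ?k = w" by simp
  obtain i where i: "i \<ge> snd (sq x P0 (Suc ?k))" "i + int (length w) \<le> snd (sq x P0 ?k)"
    "wd (fst (sq x P0 (Suc ?k))) i (length w) = w"
    using sq_step[OF x, of P0 ?k] w fk by auto
  have "wd (lim x P0) i (length w) = wd (fst (sq x P0 (Suc ?k))) i (length w)"
  proof -
    have "\<forall>k'. lim x P0 (i + int k') = fst (sq x P0 (Suc ?k)) (i + int k')"
      using lim_eq[OF x, of P0 "Suc ?k"] i(1) by (simp del: sq.simps)
    then show ?thesis unfolding wd_def by simp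
  qed
  moreover have "snd (sq x P0 ?k) \<le> P0" using sq_props[OF x, of P0 ?k] by simp
  ultimately show ?thesis using i by (intro exI[of _ i]) auto
qed

lemma lt_exists:
  assumes x: "x \<in> T" and P0: "P0 \<le> 0"
  shows "\<exists>t\<in>T. (\<forall>i\<ge>P0. t i = x i) \<and> left_transitive Y (f t)"
proof (intro bexI conjI)
  let ?t = "lim x P0"
  have tT: "?t \<in> T" using lim_T[OF x] .
  then show "?t \<in> T" .
  show "\<forall>i\<ge>P0. ?t i = x i" using lim_x[OF x] by simp
  show "left_transitive Y (f ?t)"
    unfolding left_transitive_def
  proof (intro conjI ballI allI)
    show "f ?t \<in> Y" using fY[OF tT] .
    fix z n assume z: "z \<in> Y"
    then obtain t0 where t0: "t0 \<in> T" "z = f t0" using f_onto by blast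
    define w where "w = wd t0 (- int (n + rad)) (2 * (n + rad) + 1)"
    have wl: "w \<in> lang T" unfolding w_def using wd_in_lang[OF t0(1)] .
    obtain i where i: "i + int (length w) \<le> P0" "wd ?t i (length w) = w" using lim_occ[OF x wl] by blast
    define c where "c = i + int n + int rad"
    show "\<exists>i\<le>0. \<forall>j. \<bar>j\<bar> \<le> int n \<longrightarrow> shiftn i (f ?t) j = z j"
    proof (intro exI conjI allI impI)
      show "c \<le> 0" using i(1) P0 unfolding c_def w_def by simp
      fix j :: int assume j: "\<bar>j\<bar> \<le> int n"
      have "shiftn c (f ?t) j = f (shiftn c ?t) j" using f_shiftn[OF tT] by simp
      also have "\<dots> = f t0 j"
      proof (rule radius)
        show "shiftn c ?t \<in> T" using T_shiftn[OF tT] .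
        show "t0 \<in> T" by fact
        show "\<forall>i'. \<bar>i' - j\<bar> \<le> int rad \<longrightarrow> shiftn c ?t i' = t0 i'"
        proof (intro allI impI)
          fix i' assume i': "\<bar>i' - j\<bar> \<le> int rad"
          define k where "k = nat (i' + int n + int rad)"
          have k: "k < 2 * (n + rad) + 1" "i' = int k - int n - int rad" using i' j unfolding k_def by auto
          have "t0 i' = w ! k" using k(1) by (subst k(2)) (simp add: w_def algebra_simps)
          also have "\<dots> = ?t (i + int k)" using i(2) k(1) unfolding w_def
            by (metis length_wd nth_wd)
          also have "\<dots> = shiftn c ?t i'" unfolding c_def by (subst k(2)) (simp add: shiftn_app algebra_simps)
          finally show "shiftn c ?t i' = t0 i'" by simp
        qed
      qed
      finally show "shiftn c (f ?t) j = z j" using t0 by simp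
    qed
  qed
qed

end



lemma wd_eq_iff: "wd x i (length w) = w \<longleftrightarrow> (\<forall>k<length w. x (i + int k) = w ! k)"
  by (auto simp: list_eq_iff_nth_eq)

lemma lang_iff: "w \<in> lang X \<longleftrightarrow> (\<exists>x\<in>X. \<exists>i. \<forall>k<length w. x (i + int k) = w ! k)"
  unfolding lang_def occurs_def by auto

context setting begin

lemma memS: "s \<in> S \<longleftrightarrow> (\<forall>i. (s i, s (i+1)) \<in> E)" using S_E by blast

lemma glue_S:
  assumes "s1 \<in> S" "s2 \<in> S" "s1 e = s2 e'"
  shows "(\<lambda>i. if i \<le> e then s1 i else s2 (i - e + e')) \<in> S"
  unfolding memS
proof
  fix i
  consider "i < e" | "i = e" | "i > e" by linarith
  then show "((if i \<le> e then s1 i else s2 (i - e + e')), (if i + 1 \<le> e then s1 (i + 1) else s2 (i + 1 - e + e'))) \<in> E"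
  proof cases
    case 1 then show ?thesis using assms(1) memS by auto
  next
    case 2 then show ?thesis using assms(2,3) memS[of s2] by (auto simp: add.commute)
  next
    case 3
    have "(s2 (i - e + e'), s2 (i - e + e' + 1)) \<in> E" using assms(2) memS by blast
    then show ?thesis using 3 by (simp add: algebra_simps)
  qed
qed

lemma word_glue:
  assumes pi: "\<pi> \<in> lang S" "\<pi> \<noteq> []" and aw: "a # w \<in> lang S" and la: "last \<pi> = a"
  shows "\<pi> @ w \<in> lang S"
proof -
  obtain s1 i1 where s1: "s1 \<in> S" "\<forall>k<length \<pi>. s1 (i1 + int k) = \<pi> ! k" using pi(1) lang_iff by metis
  obtain s2 i2 where s2: "s2 \<in> S" "\<forall>k<length (a#w). s2 (i2 + int k) = (a#w) ! k" using aw lang_iff by metis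
  define e where "e = i1 + int (length \<pi>) - 1"
  have "s1 e = last \<pi>"
  proof -
    have ie: "i1 + int (length \<pi> - 1) = e" unfolding e_def using pi(2) by (cases \<pi>) auto
    have "s1 (i1 + int (length \<pi> - 1)) = \<pi> ! (length \<pi> - 1)" using s1(2) pi(2) by simp
    then show ?thesis using ie pi(2) by (simp add: last_conv_nth)
  qed
  moreover have "s2 i2 = a" using s2(2) by (metis add.right_neutral length_Cons nth_Cons_0 of_nat_0 zero_less_Suc)
  ultimately have eq: "s1 e = s2 i2" using la by simp
  define s where "s = (\<lambda>i. if i \<le> e then s1 i else s2 (i - e + i2))"
  have sS: "s \<in> S" unfolding s_def by (rule glue_S[OF s1(1) s2(1) eq])
  have "\<forall>k<length (\<pi> @ w). s (i1 + int k) = (\<pi> @ w) ! k"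
  proof (intro allI impI)
    fix k assume k: "k < length (\<pi> @ w)"
    show "s (i1 + int k) = (\<pi> @ w) ! k"
    proof (cases "k < length \<pi>")
      case True
      then show ?thesis using s1(2) unfolding s_def e_def by (simp add: nth_append)
    next
      case False
      define j where "j = k - length \<pi>"
      have j: "k = length \<pi> + j" "j < length w" using False k unfolding j_def by auto
      have "s (i1 + int k) = s2 (i2 + int (Suc j))" unfolding s_def e_def using j(1) by (simp add: algebra_simps)
      also have "\<dots> = (a#w) ! Suc j" using s2(2)[rule_format, of "Suc j"] j(2) by (simp only: length_Cons Suc_less_eq)
      also have "\<dots> = (\<pi> @ w) ! k" using j(1) by (simp add: nth_append)
      finally show ?thesis .
    qed
  qed
  then show ?thesis using sS lang_iff by blast
qed

lemma RR_unique: "a # w1 \<in> lang S \<Longrightarrow> a # w2 \<in> lang S \<Longrightarrow> map p w1 = map p w2 \<Longrightarrow> w1 = w2"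
proof (induction w1 arbitrary: a w2)
  case Nil then show ?case by simp
next
  case (Cons x xs)
  then obtain y ys where w2: "w2 = y # ys" by (cases w2) auto
  have "[a, x] \<in> lang S" using lang_prefix[of "[a,x]" xs] Cons.prems(1) by simp
  moreover have "[a, y] \<in> lang S" using lang_prefix[of "[a,y]" ys] Cons.prems(2) w2 by simp
  moreover have "p x = p y" using Cons.prems(3) w2 by simp
  ultimately have xy: "x = y" using RR by blast
  have "x # xs \<in> lang S" using lang_suffix[of "[a]" "x # xs"] Cons.prems(1) by simp
  moreover have "x # ys \<in> lang S" using lang_suffix[of "[a]" "y # ys"] Cons.prems(2) w2 xy by simp
  moreover have "map p xs = map p ys" using Cons.prems(3) w2 by simp
  ultimately show ?case using Cons.IH w2 xy by blast
qed

definition Iset :: "'b list \<Rightarrow> 'c set" where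
  "Iset u = {last \<pi> | \<pi>. \<pi> \<in> lang S \<and> \<pi> \<noteq> [] \<and> map p \<pi> = u}"

definition Fol :: "'c \<Rightarrow> 'b list set" where
  "Fol b = {map p (b # w) | w. b # w \<in> lang S}"

lemma shrink:
  assumes a: "a \<in> Iset u" and b: "b \<in> Iset u" and aw: "a # w \<in> lang S" and nb: "map p (a # w) \<notin> Fol b"
  shows "Iset (u @ map p w) \<noteq> {} \<and> card (Iset (u @ map p w)) < card (Iset u)"
proof
  obtain \<pi> where pi: "\<pi> \<in> lang S" "\<pi> \<noteq> []" "map p \<pi> = u" "last \<pi> = a" using a unfolding Iset_def by blast
  obtain \<rho> where rho: "\<rho> \<in> lang S" "\<rho> \<noteq> []" "map p \<rho> = u" "last \<rho> = b" using b unfolding Iset_def by blast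
  have pab: "p a = p b"
  proof -
    have "p a = last u" using pi by (metis last_map)
    moreover have "p b = last u" using rho by (metis last_map)
    ultimately show ?thesis by simp
  qed
  have "\<pi> @ w \<in> lang S" using word_glue[OF pi(1,2) aw pi(4)] .
  moreover have "last (\<pi> @ w) \<in> Iset (u @ map p w)" unfolding Iset_def using pi calculation by force
  ultimately show "Iset (u @ map p w) \<noteq> {}" by blast
  define G where "G c = last (c # (THE w'. c # w' \<in> lang S \<and> map p w' = map p w))" for c
  have sub: "Iset (u @ map p w) \<subseteq> G ` (Iset u - {b})"
  proof
    fix c' assume "c' \<in> Iset (u @ map p w)"
    then obtain \<pi>' where pi': "\<pi>' \<in> lang S" "\<pi>' \<noteq> []" "map p \<pi>' = u @ map p w" "last \<pi>' = c'"
      unfolding Iset_def by blast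
    define m where "m = length u"
    have m: "m \<ge> 1" unfolding m_def using pi(2,3) by (cases \<pi>) auto
    define \<pi>1 where "\<pi>1 = take m \<pi>'"
    define \<pi>2 where "\<pi>2 = drop m \<pi>'"
    have lenp: "length \<pi>' = m + length w" using arg_cong[OF pi'(3), of length] unfolding m_def by simp
    have p1: "map p \<pi>1 = u" unfolding \<pi>1_def m_def using pi'(3) by (metis append_eq_conv_conj take_map)
    have p2: "map p \<pi>2 = map p w" unfolding \<pi>2_def m_def using pi'(3) by (metis append_eq_conv_conj drop_map)
    have ne1: "\<pi>1 \<noteq> []" unfolding \<pi>1_def using m lenp by auto
    have split: "\<pi>' = butlast \<pi>1 @ (last \<pi>1 # \<pi>2)" unfolding \<pi>1_def \<pi>2_def using ne1 \<pi>1_def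
      by (metis append_butlast_last_id append_assoc append_Cons append_Nil append_take_drop_id)
    have l1: "\<pi>1 \<in> lang S" using lang_prefix[of \<pi>1 \<pi>2] pi'(1) unfolding \<pi>1_def \<pi>2_def by simp
    define c where "c = last \<pi>1"
    have cI: "c \<in> Iset u" unfolding Iset_def c_def using l1 ne1 p1 by blast
    have c2: "c # \<pi>2 \<in> lang S" using lang_suffix[of "butlast \<pi>1" "last \<pi>1 # \<pi>2"] pi'(1) split
      unfolding c_def by simp
    have cb: "c \<noteq> b"
    proof
      assume "c = b"
      then have "map p (b # \<pi>2) \<in> Fol b" using c2 unfolding Fol_def by blast
      moreover have "map p (b # \<pi>2) = map p (a # w)" using p2 pab by simp
      ultimately show False using nb by simp
    qed
    have the: "(THE w'. c # w' \<in> lang S \<and> map p w' = map p w) = \<pi>2"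
      using c2 p2 RR_unique by (intro the_equality) auto
    have "c' = last (c # \<pi>2)" using pi'(4) split unfolding c_def by (metis last_appendR list.distinct(1))
    then have "c' = G c" unfolding G_def the by simp
    then show "c' \<in> G ` (Iset u - {b})" using cI cb by blast
  qed
  have "card (Iset (u @ map p w)) \<le> card (G ` (Iset u - {b}))" by (rule card_mono[OF finite sub])
  also have "\<dots> \<le> card (Iset u - {b})" by (rule card_image_le) simp
  also have "\<dots> < card (Iset u)" using card_Diff1_less[of "Iset u" b] b by simp
  finally show "card (Iset (u @ map p w)) < card (Iset u)" .
qed

lemma magic_exists:
  assumes ne: "S \<noteq> {}"
  shows "\<exists>u v. u \<noteq> [] \<and> Iset u = {v}"
proof -
  obtain s where s: "s \<in> S" using ne by blast
  have "[s 0] \<in> lang S" using wd_in_lang[OF s, of 0 1] by (simp add: wd_def)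
  then have ne0: "Iset [p (s 0)] \<noteq> {}" unfolding Iset_def by force
  define n0 where "n0 = (LEAST n. \<exists>u. Iset u \<noteq> {} \<and> card (Iset u) = n)"
  obtain u0 where u0: "Iset u0 \<noteq> {}" "card (Iset u0) = n0"
    unfolding n0_def using LeastI_ex[of "\<lambda>n. \<exists>u. Iset u \<noteq> {} \<and> card (Iset u) = n"] ne0 by blast
  have minimal: "\<not> (Iset u \<noteq> {} \<and> card (Iset u) < n0)" for u
    unfolding n0_def using not_less_Least by blast
  have u0ne: "u0 \<noteq> []" using u0(1) unfolding Iset_def by auto
  have "card (Iset u0) = 1"
  proof (rule ccontr)
    assume c1: "card (Iset u0) \<noteq> 1"
    have "card (Iset u0) \<noteq> 0" using u0(1) by simp
    with c1 have "card (Iset u0) \<ge> 2" by linarith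
    then obtain a b where ab: "a \<in> Iset u0" "b \<in> Iset u0" "a \<noteq> b"
      by (metis One_nat_def card_le_Suc_iff numeral_2_eq_2 insert_iff)
    have one: "[c] \<in> lang S" if cI: "c \<in> Iset u0" for c
    proof -
      from cI obtain \<pi> where "\<pi> \<in> lang S" "\<pi> \<noteq> []" "last \<pi> = c" unfolding Iset_def by blast
      then show ?thesis using lang_suffix[of "butlast \<pi>" "[last \<pi>]"] by (metis append_butlast_last_id)
    qed
    have "Fol a \<noteq> Fol b" using SEP one ab unfolding Fol_def by blast
    then obtain v where "(v \<in> Fol a \<and> v \<notin> Fol b) \<or> (v \<in> Fol b \<and> v \<notin> Fol a)" by blast
    then show False
    proof
      assume "v \<in> Fol a \<and> v \<notin> Fol b"
      then obtain w where "a # w \<in> lang S" "map p (a # w) \<notin> Fol b" unfolding Fol_def by blast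
      then show False using shrink[OF ab(1,2)] minimal u0 by blast
    next
      assume "v \<in> Fol b \<and> v \<notin> Fol a"
      then obtain w where "b # w \<in> lang S" "map p (b # w) \<notin> Fol a" unfolding Fol_def by blast
      then show False using shrink[OF ab(2,1)] minimal u0 by blast
    qed
  qed
  then obtain v where "Iset u0 = {v}" using card_1_singletonE by blast
  then show ?thesis using u0ne by blast
qed

end



context setting begin

definition mu :: "'b list" where "mu = (SOME u. u \<noteq> [] \<and> (\<exists>v. Iset u = {v}))"

lemma mu_props: "S \<noteq> {} \<Longrightarrow> mu \<noteq> [] \<and> (\<exists>v. Iset mu = {v})"
proof -
  assume "S \<noteq> {}"
  from magic_exists[OF this] have "\<exists>u. u \<noteq> [] \<and> (\<exists>v. Iset u = {v})" by blast
  then show ?thesis unfolding mu_def by (rule someI_ex)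
qed

lemma in_Iset:
  assumes s: "s \<in> S" and u: "u \<noteq> []" and w: "wd (p \<circ> s) i (length u) = u"
  shows "s (i + int (length u) - 1) \<in> Iset u"
proof -
  let ?\<pi> = "wd s i (length u)"
  have "?\<pi> \<in> lang S" using wd_in_lang[OF s] .
  moreover have "?\<pi> \<noteq> []" using u by (simp add: wd_def)
  moreover have "map p ?\<pi> = u" using w by (simp add: wd_def comp_def)
  moreover have "last ?\<pi> = s (i + int (length u) - 1)"
  proof -
    have ne: "?\<pi> \<noteq> []" using u by (simp add: wd_def)
    have "last ?\<pi> = ?\<pi> ! (length u - 1)" using last_conv_nth[OF ne] by simp
    also have "\<dots> = s (i + int (length u - 1))" using u by simp
    finally show ?thesis using u by (cases u) auto
  qed
  ultimately show ?thesis unfolding Iset_def by force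
qed

lemma mu_langY: "S \<noteq> {} \<Longrightarrow> \<exists>z\<in>Y. \<exists>a. wd z a (length mu) = mu"
proof -
  assume ne: "S \<noteq> {}"
  then obtain v where "Iset mu = {v}" using mu_props by blast
  then have "v \<in> Iset mu" by simp
  then obtain \<pi> where pi: "\<pi> \<in> lang S" "map p \<pi> = mu" unfolding Iset_def by blast
  then obtain s0 a where s0: "s0 \<in> S" "wd s0 a (length \<pi>) = \<pi>" unfolding lang_def occurs_wd by blast
  have "p \<circ> s0 \<in> Y" using piS s0(1) by blast
  moreover have "wd (p \<circ> s0) a (length mu) = mu"
  proof -
    have "length \<pi> = length mu" using pi(2) length_map by metis
    moreover have "wd (p \<circ> s0) a (length \<pi>) = map p (wd s0 a (length \<pi>))" by (simp add: wd_def)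
    ultimately show ?thesis using s0(2) pi(2) by simp
  qed
  ultimately show ?thesis by blast
qed

lemma pair_lang: "s \<in> S \<Longrightarrow> [s i, s (i+1)] \<in> lang S"
  using wd_in_lang[of s S i 2] by (simp add: wd_def numeral_2_eq_2)

lemma single_lang: "s \<in> S \<Longrightarrow> [s i] \<in> lang S"
  using wd_in_lang[of s S i 1] by (simp add: wd_def)

lemma fwd_det:
  assumes s: "s \<in> S" and s': "s' \<in> S" and e: "s e = s' e"
    and lab: "\<forall>i. e < i \<and> i \<le> j \<longrightarrow> p (s i) = p (s' i)" and ej: "e \<le> j"
  shows "s j = s' j"
proof -
  have "\<forall>n. e + int n \<le> j \<longrightarrow> s (e + int n) = s' (e + int n)"
  proof
    fix n show "e + int n \<le> j \<longrightarrow> s (e + int n) = s' (e + int n)"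
    proof (induction n)
      case 0 then show ?case using e by simp
    next
      case (Suc n)
      show ?case
      proof
        assume le: "e + int (Suc n) \<le> j"
        then have eq: "s (e + int n) = s' (e + int n)" using Suc by simp
        have "[s (e + int n), s (e + int n + 1)] \<in> lang S" using pair_lang[OF s] .
        moreover have "[s (e + int n), s' (e + int n + 1)] \<in> lang S" using pair_lang[OF s'] eq by simp
        moreover have "p (s (e + int n + 1)) = p (s' (e + int n + 1))" using lab le by simp
        ultimately have "s (e + int n + 1) = s' (e + int n + 1)" using RR by blast
        moreover have eqi: "e + int (Suc n) = e + int n + 1" by simp
        ultimately show "s (e + int (Suc n)) = s' (e + int (Suc n))" by (simp only: eqi)
      qed
    qed
  qed
  moreover have "j = e + int (nat (j - e))" using ej by simp
  ultimately show ?thesis by (metis order_refl)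
qed

lemma past_det:
  assumes s: "s \<in> S" and s': "s' \<in> S" and lt: "left_transitive Y (p \<circ> s)"
    and lab: "\<forall>i\<le>j. p (s i) = p (s' i)"
  shows "s j = s' j"
proof -
  have ne: "S \<noteq> {}" using s by blast
  obtain v where v: "Iset mu = {v}" and mune: "mu \<noteq> []" using mu_props[OF ne] by blast
  obtain z a where z: "z \<in> Y" "wd z a (length mu) = mu" using mu_langY[OF ne] by blast
  obtain i where i: "i + int (length mu) \<le> j + 1" "wd (p \<circ> s) i (length mu) = mu"
    using lt_occ[OF lt z(1) z(2)] by blast
  have i': "wd (p \<circ> s') i (length mu) = mu"
  proof -
    have "wd (p \<circ> s') i (length mu) = wd (p \<circ> s) i (length mu)"
      unfolding wd_def using i(1) lab by auto
    then show ?thesis using i(2) by simp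
  qed
  let ?e = "i + int (length mu) - 1"
  have "s ?e \<in> Iset mu" using in_Iset[OF s mune i(2)] .
  moreover have "s' ?e \<in> Iset mu" using in_Iset[OF s' mune i'] .
  ultimately have "s ?e = s' ?e" using v by simp
  then show ?thesis
    using fwd_det[OF s s', of ?e j] lab i(1) by auto
qed

definition lift :: "(int \<Rightarrow> 'b) \<Rightarrow> (int \<Rightarrow> 'c)" where
  "lift y = (SOME s. s \<in> S \<and> p \<circ> s = y)"

lemma lift_props: "y \<in> Y \<Longrightarrow> lift y \<in> S \<and> p \<circ> lift y = y"
proof -
  assume "y \<in> Y"
  then have "\<exists>s. s \<in> S \<and> p \<circ> s = y" using piS by blast
  then show ?thesis unfolding lift_def by (rule someI_ex)
qed

lemma lt_Y: "left_transitive Y y \<Longrightarrow> y \<in> Y" unfolding left_transitive_def by blast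

lemma lift_past:
  assumes lt: "left_transitive Y y" and y': "left_transitive Y y'" and ag: "\<forall>i\<le>j. y i = y' i"
  shows "lift y j = lift y' j"
proof -
  have l: "lift y \<in> S" "p \<circ> lift y = y" using lift_props[OF lt_Y[OF lt]] by auto
  have l': "lift y' \<in> S" "p \<circ> lift y' = y'" using lift_props[OF lt_Y[OF y']] by auto
  show ?thesis
  proof (rule past_det[OF l(1) l'(1)])
    show "left_transitive Y (p \<circ> lift y)" using l(2) lt by simp
    show "\<forall>i\<le>j. p (lift y i) = p (lift y' i)"
    proof (intro allI impI)
      fix i assume "i \<le> j"
      then show "p (lift y i) = p (lift y' i)" using ag fun_cong[OF l(2), of i] fun_cong[OF l'(2), of i] by simp
    qed
  qed
qed

lemma lift_shift:
  assumes lt: "left_transitive Y y"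
  shows "lift (shift y) j = lift y (j + 1)"
proof -
  have l: "lift y \<in> S" "p \<circ> lift y = y" using lift_props[OF lt_Y[OF lt]] by auto
  have yY: "y \<in> Y" using lt_Y[OF lt] .
  have sy: "shift y \<in> Y" using Y_shift yY by blast
  have lts: "left_transitive Y (shift y)"
    by (rule lt_transfer[OF lt sy, of 0 1]) (simp add: shift_def)
  have ls: "lift (shift y) \<in> S" "p \<circ> lift (shift y) = shift y" using lift_props[OF sy] by auto
  have sl: "shift (lift y) \<in> S"
  proof -
    have "\<forall>i. (lift y (i+1), lift y (i+1+1)) \<in> E" using l(1) memS by blast
    then show ?thesis unfolding memS shift_def by simp
  qed
  have "lift (shift y) j = shift (lift y) j"
  proof (rule past_det[OF ls(1) sl])
    show "left_transitive Y (p \<circ> lift (shift y))" using ls(2) lts by simp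
    show "\<forall>i\<le>j. p (lift (shift y) i) = p (shift (lift y) i)"
    proof (intro allI impI)
      fix i
      show "p (lift (shift y) i) = p (shift (lift y) i)"
        using fun_cong[OF ls(2), of i] fun_cong[OF l(2), of "i+1"] by (simp add: shift_def)
    qed
  qed
  then show ?thesis by (simp add: shift_def)
qed

end



context setting begin

definition RR0 :: nat where "RR0 = 2 * rad + Lm"

lemma lift_app: "y \<in> Y \<Longrightarrow> p (lift y i) = y i"
  using lift_props[of y] by (metis comp_apply)

lemma fol_sub:
  assumes x1: "x1 \<in> T" and x2: "x2 \<in> T" and lt1: "left_transitive Y (f x1)" and lt2: "left_transitive Y (f x2)"
    and ag: "\<forall>i. - int RR0 \<le> i \<and> i \<le> int N + int rad \<longrightarrow> x1 i = x2 i"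
    and aw: "lift (f x1) (int N) # w \<in> lang S"
  shows "map p (lift (f x1) (int N) # w) \<in> Fol (lift (f x2) (int N))"
proof -
  let ?y1 = "f x1" and ?y2 = "f x2" and ?s1 = "lift (f x1)"
  have y1Y: "?y1 \<in> Y" and y2Y: "?y2 \<in> Y" using lt1 lt2 lt_Y by auto
  have s1: "?s1 \<in> S" using lift_props[OF y1Y] by blast
  have y12: "?y1 i = ?y2 i" if "- int RR0 + int rad \<le> i" "i \<le> int N" for i
  proof -
    have "\<forall>ia. \<bar>ia - i\<bar> \<le> int rad \<longrightarrow> x1 ia = x2 ia"
    proof (intro allI impI)
      fix ia assume "\<bar>ia - i\<bar> \<le> int rad"
      then have "- int RR0 \<le> ia \<and> ia \<le> int N + int rad" using that unfolding RR0_def by (simp add: abs_le_iff)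
      then show "x1 ia = x2 ia" using ag by blast
    qed
    then show ?thesis using radius[OF x1 x2, of i] by blast
  qed
  obtain s0 i0 where s0: "s0 \<in> S" "\<forall>k<length (?s1 (int N) # w). s0 (i0 + int k) = (?s1 (int N) # w) ! k"
    using aw lang_iff by metis
  have s0i0: "?s1 (int N) = s0 i0" using s0(2)[rule_format, of 0] by simp
  define s' where "s' = (\<lambda>i. if i \<le> int N then ?s1 i else s0 (i - int N + i0))"
  have s'S: "s' \<in> S" unfolding s'_def by (rule glue_S[OF s1 s0(1) s0i0])
  define y' where "y' = p \<circ> s'"
  have y'Y: "y' \<in> Y" unfolding y'_def using piS s'S by blast
  have y'1: "\<forall>i\<le>int N. y' i = ?y1 (i + 0)" unfolding y'_def s'_def using lift_app[OF y1Y] by simp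
  have lt': "left_transitive Y y'" by (rule lt_transfer[OF lt1 y'Y y'1])
  obtain x' where x': "x' \<in> T" "\<forall>i\<le>0. x' i = x1 i" "f x' = y'"
    using rc x1 lt' y'1 unfolding right_continuing_ae_def by force
  define x'' where "x'' = (\<lambda>i. if i \<le> - int Lm then x2 i else x' i)"
  have x''T: "x'' \<in> T" unfolding x''_def
  proof (rule glue_T[OF x2 x'(1)])
    show "\<forall>i. - int Lm < i \<and> i \<le> - int Lm + int Lm \<longrightarrow> x2 i = x' i"
      using ag x'(2) by (auto simp: RR0_def)
  qed
  have A: "x'' i = x2 i" if "i \<le> 0" for i
    using that ag x'(2) unfolding x''_def by (auto simp: RR0_def)
  have B: "x'' i = x' i" if "i \<ge> - int RR0" for i
    using that ag x'(2) unfolding x''_def by (auto simp: RR0_def)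
  define y'' where "y'' = f x''"
  have y''Y: "y'' \<in> Y" unfolding y''_def using fY[OF x''T] .
  have C: "\<forall>i\<le>int N. y'' i = ?y2 (i + 0)"
  proof (intro allI impI)
    fix i assume iN: "i \<le> int N"
    show "y'' i = ?y2 (i + 0)"
    proof (cases "i \<le> - int rad")
      case True
      then show ?thesis unfolding y''_def using radius[OF x''T x2, of i] A by auto
    next
      case False
      have "y'' i = f x' i" unfolding y''_def using radius[OF x''T x'(1), of i] B False by (auto simp: RR0_def)
      also have "\<dots> = ?y1 i" using x'(3) y'1 iN by simp
      also have "\<dots> = ?y2 i" using y12 False iN by (simp add: RR0_def)
      finally show ?thesis by simp
    qed
  qed
  have D: "y'' i = y' i" if "i > int N" for i
    unfolding y''_def using radius[OF x''T x'(1), of i] B that x'(3) by (auto simp: RR0_def)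
  have lt'': "left_transitive Y y''" by (rule lt_transfer[OF lt2 y''Y C])
  have s''N: "lift y'' (int N) = lift ?y2 (int N)"
    using lift_past[OF lt'' lt2, of "int N"] C by simp
  define ws where "ws = wd (lift y'') (int N + 1) (length w)"
  have "wd (lift y'') (int N) (Suc (length w)) = lift y'' (int N) # ws"
    unfolding ws_def wd_def by (simp add: map_upt_Suc algebra_simps del: upt_Suc)
  then have wsl: "lift ?y2 (int N) # ws \<in> lang S"
    using wd_in_lang[of "lift y''" S "int N" "Suc (length w)"] lift_props[OF y''Y] s''N by auto
  have mp: "map p ws = map p w"
  proof (rule nth_equalityI)
    show "length (map p ws) = length (map p w)" unfolding ws_def by simp
    fix k assume k: "k < length (map p ws)"
    then have kw: "k < length w" unfolding ws_def by simp
    have "map p ws ! k = p (lift y'' (int N + 1 + int k))" unfolding ws_def using kw by simp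
    also have "\<dots> = y'' (int N + 1 + int k)" using lift_app[OF y''Y] by simp
    also have "\<dots> = y' (int N + 1 + int k)" using D by simp
    also have "\<dots> = p (s0 (i0 + int (Suc k)))" unfolding y'_def s'_def by (simp add: algebra_simps)
    also have "\<dots> = p ((?s1 (int N) # w) ! Suc k)" using s0(2) kw by (metis length_Cons Suc_less_eq)
    also have "\<dots> = map p w ! k" using kw by simp
    finally show "map p ws ! k = map p w ! k" .
  qed
  have "p (?s1 (int N)) = p (lift ?y2 (int N))"
    using lift_app[OF y1Y] lift_app[OF y2Y] y12[of "int N"] by (simp add: RR0_def)
  then have "map p (?s1 (int N) # w) = map p (lift ?y2 (int N) # ws)" using mp by simp
  then show ?thesis using wsl unfolding Fol_def by blast
qed

lemma window:
  assumes x1: "x1 \<in> T" and x2: "x2 \<in> T" and lt1: "left_transitive Y (f x1)" and lt2: "left_transitive Y (f x2)"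
    and ag: "\<forall>i. - int RR0 \<le> i \<and> i \<le> int N + int rad \<longrightarrow> x1 i = x2 i"
  shows "lift (f x1) (int N) = lift (f x2) (int N)"
proof (rule ccontr)
  let ?a1 = "lift (f x1) (int N)" and ?a2 = "lift (f x2) (int N)"
  assume ne: "?a1 \<noteq> ?a2"
  have ag': "\<forall>i. - int RR0 \<le> i \<and> i \<le> int N + int rad \<longrightarrow> x2 i = x1 i" using ag by simp
  have "Fol ?a1 \<subseteq> Fol ?a2" unfolding Fol_def[of ?a1] using fol_sub[OF x1 x2 lt1 lt2 ag] by blast
  moreover have "Fol ?a2 \<subseteq> Fol ?a1" unfolding Fol_def[of ?a2] using fol_sub[OF x2 x1 lt2 lt1 ag'] by blast
  ultimately have "Fol ?a1 = Fol ?a2" by blast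
  moreover have "[?a1] \<in> lang S" using single_lang lift_props lt1 lt_Y by blast
  moreover have "[?a2] \<in> lang S" using single_lang lift_props lt2 lt_Y by blast
  ultimately show False using SEP ne unfolding Fol_def by blast
qed

end



context setting begin

definition xt :: "(int \<Rightarrow> 'a) \<Rightarrow> (int \<Rightarrow> 'a)" where
  "xt x = (SOME t. t \<in> T \<and> (\<forall>i\<ge>- int RR0. t i = x i) \<and> left_transitive Y (f t))"

lemma xt_props: "x \<in> T \<Longrightarrow> xt x \<in> T \<and> (\<forall>i\<ge>- int RR0. xt x i = x i) \<and> left_transitive Y (f (xt x))"
proof -
  assume x: "x \<in> T"
  have "\<exists>t. t \<in> T \<and> (\<forall>i\<ge>- int RR0. t i = x i) \<and> left_transitive Y (f t)"
    using lt_exists[OF x, of "- int RR0"] by auto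
  then show ?thesis unfolding xt_def by (rule someI_ex)
qed

definition g :: "(int \<Rightarrow> 'a) \<Rightarrow> 'c" where
  "g x = lift (f (xt x)) (int N)"

definition phi :: "(int \<Rightarrow> 'a) \<Rightarrow> (int \<Rightarrow> 'c)" where
  "phi x = (\<lambda>i. g (shiftn (i - int N) x))"

lemma g_local:
  assumes x: "x \<in> T" and x': "x' \<in> T" and ag: "\<forall>i. - int RR0 \<le> i \<and> i \<le> int N + int rad \<longrightarrow> x i = x' i"
  shows "g x = g x'"
  unfolding g_def
proof (rule window)
  show "xt x \<in> T" "left_transitive Y (f (xt x))" using xt_props[OF x] by auto
  show "xt x' \<in> T" "left_transitive Y (f (xt x'))" using xt_props[OF x'] by auto
  show "\<forall>i. - int RR0 \<le> i \<and> i \<le> int N + int rad \<longrightarrow> xt x i = xt x' i"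
    using ag xt_props[OF x] xt_props[OF x'] by auto
qed

lemma lt_shift: "left_transitive Y y \<Longrightarrow> left_transitive Y (shift y)"
proof -
  assume lt: "left_transitive Y y"
  have sy: "shift y \<in> Y" using Y_shift lt_Y[OF lt] by blast
  show ?thesis by (rule lt_transfer[OF lt sy, of 0 1]) (simp add: shift_def)
qed

lemma phi_S: assumes x: "x \<in> T" shows "phi x \<in> S"
  unfolding memS
proof
  fix i
  define z where "z = shiftn (i - int N) x"
  have z: "z \<in> T" unfolding z_def using T_shiftn[OF x] .
  define t where "t = xt z"
  have t: "t \<in> T" "\<forall>i\<ge>- int RR0. t i = z i" "left_transitive Y (f t)" using xt_props[OF z] unfolding t_def by auto
  have st: "shift t \<in> T" using T_shift t(1) by blast
  have sz: "shift z \<in> T" using T_shift z by blast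
  have lst: "left_transitive Y (f (shift t))" using lt_shift[OF t(3)] f_comm t(1) by simp
  have "phi x (i + 1) = g (shift z)" unfolding phi_def z_def by (simp add: shift_shiftn algebra_simps)
  also have "\<dots> = lift (f (shift t)) (int N)" unfolding g_def
  proof (rule window)
    show "xt (shift z) \<in> T" "left_transitive Y (f (xt (shift z)))" using xt_props[OF sz] by auto
    show "shift t \<in> T" by fact
    show "left_transitive Y (f (shift t))" by fact
    show "\<forall>i. - int RR0 \<le> i \<and> i \<le> int N + int rad \<longrightarrow> xt (shift z) i = shift t i"
      using xt_props[OF sz] t(2) by (auto simp: shift_def)
  qed
  also have "\<dots> = lift (f t) (int N + 1)" using f_comm t(1) lift_shift[OF t(3)] by simp
  finally have e1: "phi x (i + 1) = lift (f t) (int N + 1)" .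
  have e0: "phi x i = lift (f t) (int N)" unfolding phi_def g_def t_def z_def by simp
  have "lift (f t) \<in> S" using lift_props lt_Y[OF t(3)] by blast
  then show "(phi x i, phi x (i + 1)) \<in> E" using e0 e1 memS by simp
qed

lemma phi_label: assumes x: "x \<in> T" shows "p (phi x i) = f x i"
proof -
  define z where "z = shiftn (i - int N) x"
  have z: "z \<in> T" unfolding z_def using T_shiftn[OF x] .
  have t: "xt z \<in> T" "\<forall>i\<ge>- int RR0. xt z i = z i" "left_transitive Y (f (xt z))" using xt_props[OF z] by auto
  have "p (phi x i) = f (xt z) (int N)" unfolding phi_def g_def z_def[symmetric]
    using lift_app[OF lt_Y[OF t(3)]] by simp
  also have "\<dots> = f z (int N)"
  proof (rule radius[OF t(1) z])
    show "\<forall>ia. \<bar>ia - int N\<bar> \<le> int rad \<longrightarrow> xt z ia = z ia" using t(2) by (auto simp: RR0_def abs_le_iff)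
  qed
  also have "\<dots> = f x i" unfolding z_def using f_shiftn[OF x] by (simp add: shiftn_app)
  finally show ?thesis .
qed

lemma phi_cont: "cont_on T phi"
  unfolding cont_on_def
proof (intro ballI allI)
  fix x n assume x: "x \<in> T"
  show "\<exists>m::nat. \<forall>x'\<in>T. (\<forall>i. \<bar>i\<bar> \<le> int m \<longrightarrow> x' i = x i) \<longrightarrow> (\<forall>i. \<bar>i\<bar> \<le> int n \<longrightarrow> phi x' i = phi x i)"
  proof (intro exI[of _ "n + N + RR0 + rad"] ballI impI allI)
    fix x' i assume x': "x' \<in> T" and ag: "\<forall>i. \<bar>i\<bar> \<le> int (n + N + RR0 + rad) \<longrightarrow> x' i = x i" and i: "\<bar>i\<bar> \<le> int n"
    show "phi x' i = phi x i" unfolding phi_def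
    proof (rule g_local)
      show "shiftn (i - int N) x' \<in> T" "shiftn (i - int N) x \<in> T" using T_shiftn x x' by auto
      show "\<forall>ia. - int RR0 \<le> ia \<and> ia \<le> int N + int rad \<longrightarrow> shiftn (i - int N) x' ia = shiftn (i - int N) x ia"
      proof (intro allI impI)
        fix ia assume "- int RR0 \<le> ia \<and> ia \<le> int N + int rad"
        then have "\<bar>ia + (i - int N)\<bar> \<le> int (n + N + RR0 + rad)" using i by (auto simp: abs_le_iff)
        then show "shiftn (i - int N) x' ia = shiftn (i - int N) x ia" using ag by (simp add: shiftn_app)
      qed
    qed
  qed
qed

lemma phi_comm: "shift_commuting T phi"
  unfolding shift_commuting_def
proof (intro ballI ext)
  fix x i
  show "phi (shift x) i = shift (phi x) i"
  proof -
    have "shiftn (i - int N) (shift x) = shiftn (i + 1 - int N) x" by (simp add: shift_shiftn algebra_simps)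
    then show ?thesis unfolding phi_def shift_def by simp
  qed
qed

end




theorem mainTheorem9:
  fixes T :: "(int \<Rightarrow> 'a::finite) set"
    and Y :: "(int \<Rightarrow> 'b::finite) set"
    and f :: "(int \<Rightarrow> 'a) \<Rightarrow> (int \<Rightarrow> 'b)"
    and N :: nat
    and S :: "(int \<Rightarrow> 'c::finite) set"
    and pi :: "(int \<Rightarrow> 'c) \<Rightarrow> (int \<Rightarrow> 'b)"
  assumes "subshift T" and "SFT T" and "irreducible_shift T"
    and "subshift Y"
    and "factor_map T Y f"
    and "right_continuing_ae T Y f N"
    and "minimal_rr_cover Y S pi"
  shows "\<exists>\<phi> :: (int \<Rightarrow> 'a) \<Rightarrow> (int \<Rightarrow> 'c).
           (\<forall>x\<in>T. \<phi> x \<in> S) \<and> cont_on T \<phi> \<and> shift_commuting T \<phi> \<and>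
           (\<forall>x\<in>T. f x = pi (\<phi> x))"
proof -
  obtain F :: "'a list set" where F: "finite F" "T = {x. \<forall>w\<in>F. \<not> occurs w x}"
    using assms(2) unfolding SFT_def by blast
  obtain E :: "('c \<times> 'c) set" where E: "S = {x. \<forall>i. (x i, x (i + 1)) \<in> E}"
    using assms(7) unfolding minimal_rr_cover_def one_step_SFT_def by blast
  obtain p :: "'c \<Rightarrow> 'b" where p: "\<forall>x. pi x = p \<circ> x" "factor_map S Y pi"
      "\<forall>a b c. [a, b] \<in> lang S \<longrightarrow> [a, c] \<in> lang S \<longrightarrow> p b = p c \<longrightarrow> b = c"
      "\<forall>a b. [a] \<in> lang S \<longrightarrow> [b] \<in> lang S \<longrightarrow> a \<noteq> b \<longrightarrow>
           {map p (a # w) | w. a # w \<in> lang S} \<noteq> {map p (b # w) | w. b # w \<in> lang S}"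
    using assms(7) unfolding minimal_rr_cover_def by blast
  have piS: "(\<lambda>s. p \<circ> s) ` S = Y"
  proof -
    have "pi = (\<lambda>s. p \<circ> s)" using p(1) by (intro ext) simp
    then show ?thesis using p(2) unfolding factor_map_def by simp
  qed
  interpret setting T Y f N S p E F
  proof
    show "shift ` T = T" "closed_seq T" using assms(1) unfolding subshift_def by auto
    show "irreducible_shift T" by fact
    show "T = {x. \<forall>w\<in>F. \<not> occurs w x}" "finite F" using F by auto
    show "shift ` Y = Y" using assms(4) unfolding subshift_def by auto
    show "cont_on T f" "\<forall>x\<in>T. f (shift x) = shift (f x)" "f ` T = Y"
      using assms(5) unfolding factor_map_def shift_commuting_def by auto
    show "right_continuing_ae T Y f N" by fact
    show "S = {x. \<forall>i. (x i, x (i + 1)) \<in> E}" by fact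
    show "(\<lambda>s. p \<circ> s) ` S = Y" by fact
    show "\<forall>a b c. [a, b] \<in> lang S \<longrightarrow> [a, c] \<in> lang S \<longrightarrow> p b = p c \<longrightarrow> b = c" by fact
    show "\<forall>a b. [a] \<in> lang S \<longrightarrow> [b] \<in> lang S \<longrightarrow> a \<noteq> b \<longrightarrow>
           {map p (a # w) | w. a # w \<in> lang S} \<noteq> {map p (b # w) | w. b # w \<in> lang S}" by fact
  qed
  show ?thesis
  proof (intro exI[of _ phi] conjI ballI)
    show "\<And>x. x \<in> T \<Longrightarrow> phi x \<in> S" using phi_S by blast
    show "cont_on T phi" by (rule phi_cont)
    show "shift_commuting T phi" by (rule phi_comm)
    fix x assume x: "x \<in> T"
    show "f x = pi (phi x)"
      using phi_label[OF x] p(1) by (intro ext) simp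
  qed
qed



end
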